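(* Let $(M,\mu)$ be a finite measure space, $\beta>1$, $f:M\to\mathbb R$ measurable and $E\subseteq M$ measurable with $0<\mu(E)<\mu(M)$. Define $$\tilde f(y)=\begin{cases}\operatorname{ess\,sup}_{z\in M\setminus E}|f(z)|, & y\in E,\\ f(y), & y\in M\setminus E.\end{cases}$$ Then $\tilde f^*(t)\ge f^*(t)$ for $\mu(E)\le t\le\mu(M)$, and $$\int_{M\setminus E}|\tilde f|^\beta\,d\mu=\int_{\mu(E)}^{\mu(M)}[\tilde f^*(t)]^\beta\,dt.$$
   Context: For measurable $f$ on $(M,\mu)$: $m(f,s)=\mu(\{|f|>s\})$ and $f^*(t)=\inf\{s\ge0:m(f,s)\le t\}$ is the nonincreasing rearrangement. *)

theory Defs
  imports "HOL-Probability.Probability"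
begin

definition distr_fun :: "'a measure \<Rightarrow> ('a \<Rightarrow> ereal) \<Rightarrow> ereal \<Rightarrow> ennreal" where
  "distr_fun M g s = emeasure M {x \<in> space M. \<bar>g x\<bar> > s}"

text \<open>Nonincreasing rearrangement g*(t) = inf { s >= 0 : m(g,s) <= t }
  (infimum in the extended reals; s = infinity is harmless and makes inf of the empty real set infinity).\<close>
definition rearr :: "'a measure \<Rightarrow> ('a \<Rightarrow> ereal) \<Rightarrow> real \<Rightarrow> ereal" where
  "rearr M g t = Inf {s::ereal. 0 \<le> s \<and> distr_fun M g s \<le> ennreal t}"

definition epowr :: "ereal \<Rightarrow> real \<Rightarrow> ennreal" where
  "epowr x p = (if x = \<infinity> then \<infinity> else ennreal (real_of_ereal x powr p))"

definition ftilde :: "'a measure \<Rightarrow> 'a set \<Rightarrow> ('a \<Rightarrow> real) \<Rightarrow> 'a \<Rightarrow> ereal" where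
  "ftilde M E f y = (if y \<in> E then esssup (restrict_space M (space M - E)) (\<lambda>z. ereal \<bar>f z\<bar>)
                     else ereal (f y))"

end

theory Submission
  imports Defs
begin

lemma rearr_nonneg: "0 \<le> rearr M g t"
  unfolding rearr_def by (rule Inf_greatest) auto

lemma distr_fun_meas[measurable]:
  fixes g :: "'a \<Rightarrow> ereal"
  assumes [measurable]: "g \<in> borel_measurable M"
  shows "{x \<in> space M. s < \<bar>g x\<bar>} \<in> sets M"
  by measurable

lemma rearr_gt_iff:
  fixes g :: "'a \<Rightarrow> ereal"
  assumes g[measurable]: "g \<in> borel_measurable M" and s: "0 \<le> s"
  shows "s < rearr M g t \<longleftrightarrow> ennreal t < distr_fun M g s"
proof
  assume st: "s < rearr M g t"
  show "ennreal t < distr_fun M g s"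
  proof (rule ccontr)
    assume "\<not> ennreal t < distr_fun M g s"
    then have "s \<in> {s. 0 \<le> s \<and> distr_fun M g s \<le> ennreal t}" using s by (auto simp: not_less)
    then have "rearr M g t \<le> s" unfolding rearr_def by (rule Inf_lower)
    with st show False by simp
  qed
next
  assume lt: "ennreal t < distr_fun M g s"
  have "s \<noteq> \<infinity>"
  proof
    assume "s = \<infinity>"
    then have "distr_fun M g s = 0" by (simp add: distr_fun_def)
    with lt show False by simp
  qed
  then obtain r where r: "s = ereal r" using s by (cases s) auto
  define A where "A n = {x \<in> space M. ereal (r + 1/Suc n) < \<bar>g x\<bar>}" for n::nat
  have Am: "range A \<subseteq> sets M" unfolding A_def by auto
  have inc: "incseq A"
  proof (rule incseq_SucI)
    fix n
    have "r + 1/Suc (Suc n) \<le> r + 1/Suc n" by (simp add: frac_le)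
    then show "A n \<subseteq> A (Suc n)" unfolding A_def
      by (auto intro: le_less_trans[rotated])
  qed
  have un: "(\<Union>n. A n) = {x\<in>space M. s < \<bar>g x\<bar>}"
  proof (intro equalityI subsetI)
    fix x assume "x \<in> (\<Union>n. A n)"
    then obtain n where "x \<in> A n" by auto
    then have h1: "x \<in> space M" and h2: "ereal (r + 1/Suc n) < \<bar>g x\<bar>" unfolding A_def by auto
    have h3: "ereal r < ereal (r + 1/Suc n)" by simp
    show "x \<in> {x\<in>space M. s < \<bar>g x\<bar>}" using h1 less_trans[OF h3 h2] r by simp
  next
    fix x assume x: "x \<in> {x\<in>space M. s < \<bar>g x\<bar>}"
    show "x \<in> (\<Union>n. A n)"
    proof (cases "\<bar>g x\<bar>")
      case (real v)
      with x r have "0 < v - r" by auto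
      then obtain n where "inverse (real (Suc n)) < v - r" using reals_Archimedean by blast
      then have "r + 1/Suc n < v" by (simp add: field_simps)
      then show ?thesis using x real unfolding A_def by auto
    next
      case PInf
      then show ?thesis using x unfolding A_def by auto
    next
      case MInf
      then show ?thesis using x r by auto
    qed
  qed
  have "(SUP n. emeasure M (A n)) = distr_fun M g s"
    unfolding distr_fun_def un[symmetric] using SUP_emeasure_incseq[OF Am inc] .
  then have "ennreal t < (SUP n. emeasure M (A n))" using lt by simp
  then obtain n where n: "ennreal t < emeasure M (A n)" by (auto simp: less_SUP_iff)
  have "ereal (r + 1/Suc n) \<le> rearr M g t" unfolding rearr_def
  proof (rule Inf_greatest)
    fix z assume z: "z \<in> {s. 0 \<le> s \<and> distr_fun M g s \<le> ennreal t}"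
    show "ereal (r+1/Suc n) \<le> z"
    proof (rule ccontr)
      assume "\<not> ereal (r+1/Suc n) \<le> z"
      then have zl: "z < ereal (r+1/Suc n)" by simp
      have "A n \<subseteq> {x\<in>space M. z < \<bar>g x\<bar>}" using zl by (auto simp: A_def dest: less_trans)
      then have "emeasure M (A n) \<le> distr_fun M g z" unfolding distr_fun_def
        by (rule emeasure_mono) simp
      with n z show False by auto
    qed
  qed
  moreover have "s < ereal (r+1/Suc n)" using r by simp
  ultimately show "s < rearr M g t" by (meson less_le_trans)
qed

lemma rearr_meas:
  fixes g :: "'a \<Rightarrow> ereal"
  assumes g[measurable]: "g \<in> borel_measurable M"
  shows "rearr M g \<in> borel_measurable borel"
proof (rule borel_measurableI_greater)
  fix y :: ereal
  show "{x\<in>space borel. y < rearr M g x} \<in> sets borel"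
  proof (cases "y < 0")
    case True
    then have "{x\<in>space borel. y < rearr M g x} = space borel"
      using rearr_nonneg[of M g] by (auto dest: less_le_trans)
    then show ?thesis by simp
  next
    case False
    then have "{x\<in>space borel. y < rearr M g x} = {x\<in>space borel. ennreal x < distr_fun M g y}"
      using rearr_gt_iff[OF g, of y] by auto
    then show ?thesis by simp
  qed
qed

lemma epowr_meas[measurable]: "(\<lambda>x. epowr x p) \<in> borel_measurable borel"
  unfolding epowr_def by measurable


theorem lemma5:
  fixes M :: "'a measure" and f :: "'a \<Rightarrow> real" and E :: "'a set" and \<beta> :: real
  assumes "finite_measure M"
    and "\<beta> > 1"
    and "f \<in> borel_measurable M"
    and "E \<in> sets M"
    and "0 < measure M E" and "measure M E < measure M (space M)"
  shows "(\<forall>t. measure M E \<le> t \<and> t \<le> measure M (space M) \<longrightarrow>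
            rearr M (ftilde M E f) t \<ge> rearr M (\<lambda>x. ereal (f x)) t)
       \<and> (\<integral>\<^sup>+ y \<in> space M - E. epowr \<bar>ftilde M E f y\<bar> \<beta> \<partial>M)
         = (\<integral>\<^sup>+ t \<in> {measure M E..measure M (space M)}. epowr (rearr M (ftilde M E f) t) \<beta> \<partial>lborel)"
proof -
  interpret finite_measure M by fact
  note fm[measurable] = assms(3)
  note Em[measurable] = assms(4)
  define \<Omega> where "\<Omega> = space M - E"
  define S where "S = esssup (restrict_space M \<Omega>) (\<lambda>z. ereal \<bar>f z\<bar>)"
  define F where "F = ftilde M E f"
  define a where "a = measure M E"
  define b where "b = measure M (space M)"
  have \<Omega>m[measurable]: "\<Omega> \<in> sets M" unfolding \<Omega>_def by auto
  have F_eq: "F = (\<lambda>y. if y \<in> E then S else ereal (f y))"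
    unfolding F_def ftilde_def S_def \<Omega>_def by auto
  have Fm[measurable]: "F \<in> borel_measurable M"
    unfolding F_eq by (rule measurable_If_set) auto
  define C where "C s = {x\<in>\<Omega>. s < ereal \<bar>f x\<bar>}" for s
  have Cm[measurable]: "C s \<in> sets M" for s
  proof -
    have "C s = {x\<in>space M. s < ereal \<bar>f x\<bar>} \<inter> \<Omega>" unfolding C_def \<Omega>_def by auto
    then show ?thesis by simp
  qed
  have AE1: "AE x in restrict_space M \<Omega>. ereal \<bar>f x\<bar> \<le> S"
    unfolding S_def by (rule esssup_AE)
  then have "AE x in M. x \<in> \<Omega> \<longrightarrow> ereal \<bar>f x\<bar> \<le> S"
    by (subst (asm) AE_restrict_space_iff) auto
  then have "AE x in M. x \<in> \<Omega> \<longrightarrow> ereal \<bar>f x\<bar> \<le> \<bar>S\<bar>"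
    by eventually_elim (cases S; auto)
  then have null0: "emeasure M (C \<bar>S\<bar>) = 0"
    by (subst (asm) AE_iff_measurable[of "C \<bar>S\<bar>"]) (auto simp: C_def \<Omega>_def not_le)
  have nullC: "emeasure M (C s) = 0" if "\<bar>S\<bar> \<le> s" for s
  proof -
    have "C s \<subseteq> C \<bar>S\<bar>" using that unfolding C_def by (auto dest: le_less_trans)
    then have "emeasure M (C s) \<le> emeasure M (C \<bar>S\<bar>)" by (rule emeasure_mono) simp
    with null0 show ?thesis by simp
  qed
  have Fset: "{x\<in>space M. s < \<bar>F x\<bar>} = (if s < \<bar>S\<bar> then E else {}) \<union> C s" for s
    unfolding F_eq C_def \<Omega>_def using sets.sets_into_space[OF Em] by auto
  have part1: "rearr M (\<lambda>x. ereal (f x)) t \<le> rearr M F t" if t: "a \<le> t" for t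
    unfolding rearr_def
  proof (rule Inf_superset_mono, safe)
    fix s :: ereal assume s0: "0 \<le> s" and sF: "distr_fun M F s \<le> ennreal t"
    show "distr_fun M (\<lambda>x. ereal (f x)) s \<le> ennreal t"
    proof (cases "s < \<bar>S\<bar>")
      case True
      have "{x\<in>space M. s < \<bar>ereal (f x)\<bar>} \<subseteq> {x\<in>space M. s < \<bar>F x\<bar>}"
        using True by (auto simp: F_eq)
      then have "distr_fun M (\<lambda>x. ereal (f x)) s \<le> distr_fun M F s"
        unfolding distr_fun_def by (rule emeasure_mono) simp
      with sF show ?thesis by simp
    next
      case False
      have "{x\<in>space M. s < \<bar>ereal (f x)\<bar>} \<subseteq> E \<union> C s"
        unfolding C_def \<Omega>_def by auto
      then have "distr_fun M (\<lambda>x. ereal (f x)) s \<le> emeasure M (E \<union> C s)"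
        unfolding distr_fun_def by (rule emeasure_mono) simp
      also have "\<dots> \<le> emeasure M E + emeasure M (C s)"
        by (rule emeasure_subadditive) auto
      also have "\<dots> = ennreal a" using nullC[of s] False by (simp add: a_def emeasure_eq_measure)
      also have "\<dots> \<le> ennreal t" using t by (rule ennreal_leI)
      finally show ?thesis .
    qed
  qed
  have ab: "0 < a" "a < b" using assms(5,6) by (auto simp: a_def b_def)
  have Esub: "E \<subseteq> space M" using sets.sets_into_space[OF Em] .
  have mOm: "measure M \<Omega> = b - a"
    unfolding \<Omega>_def a_def b_def by (rule finite_measure_Diff) (auto simp: Esub)
  have spO: "space (restrict_space M \<Omega>) = \<Omega>" by (auto simp: space_restrict_space \<Omega>_def)
  have spI: "space (restrict_space lborel {a..b}) = {a..b}" by (auto simp: space_restrict_space)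
  have T1: "(\<lambda>y. \<bar>F y\<bar>) \<in> restrict_space M \<Omega> \<rightarrow>\<^sub>M borel"
    by (rule measurable_restrict_space1) measurable
  have T2: "rearr M F \<in> restrict_space lborel {a..b} \<rightarrow>\<^sub>M borel"
    by (rule measurable_restrict_space1) (simp add: rearr_meas[OF Fm])
  define P1 where "P1 = distr (restrict_space M \<Omega>) borel (\<lambda>y. \<bar>F y\<bar>)"
  define P2 where "P2 = distr (restrict_space lborel {a..b}) borel (rearr M F)"
  have vUNIV1: "emeasure P1 UNIV = ennreal (b - a)"
  proof -
    have "emeasure P1 UNIV = emeasure (restrict_space M \<Omega>) \<Omega>"
      unfolding P1_def by (subst emeasure_distr[OF T1]) (auto simp: spO)
    also have "\<dots> = emeasure M \<Omega>" by (rule emeasure_restrict_space) auto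
    also have "\<dots> = ennreal (b - a)" by (simp add: emeasure_eq_measure mOm)
    finally show ?thesis .
  qed
  have vUNIV2: "emeasure P2 UNIV = ennreal (b - a)"
  proof -
    have "emeasure P2 UNIV = emeasure (restrict_space lborel {a..b}) {a..b}"
      unfolding P2_def by (subst emeasure_distr[OF T2]) (auto simp: spI)
    also have "\<dots> = emeasure lborel {a..b}" by (rule emeasure_restrict_space) auto
    also have "\<dots> = ennreal (b - a)" using ab by simp
    finally show ?thesis .
  qed
  have d1: "emeasure P1 X = emeasure M ((\<lambda>y. \<bar>F y\<bar>) -` X \<inter> \<Omega>)" if X: "X \<in> sets borel" for X
  proof -
    have "emeasure P1 X = emeasure (restrict_space M \<Omega>) ((\<lambda>y. \<bar>F y\<bar>) -` X \<inter> \<Omega>)"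
      unfolding P1_def using emeasure_distr[OF T1 X] by (simp only: spO)
    also have "\<dots> = emeasure M ((\<lambda>y. \<bar>F y\<bar>) -` X \<inter> \<Omega>)"
      by (rule emeasure_restrict_space) auto
    finally show ?thesis .
  qed
  have d2: "emeasure P2 X = emeasure lborel (rearr M F -` X \<inter> {a..b})" if X: "X \<in> sets borel" for X
  proof -
    have "emeasure P2 X = emeasure (restrict_space lborel {a..b}) (rearr M F -` X \<inter> {a..b})"
      unfolding P2_def using emeasure_distr[OF T2 X] by (simp only: spI)
    also have "\<dots> = emeasure lborel (rearr M F -` X \<inter> {a..b})"
      by (rule emeasure_restrict_space) auto
    finally show ?thesis .
  qed
  have vgt: "emeasure P1 {s<..} = emeasure P2 {s<..}" for s
  proof (cases "s < 0")
    case True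
    have U: "(UNIV::ereal set) \<in> sets borel" by simp
    have O: "{s<..} \<in> sets (borel::ereal measure)" by simp
    have "(\<lambda>y. \<bar>F y\<bar>) -` {s<..} \<inter> \<Omega> = (\<lambda>y. \<bar>F y\<bar>) -` UNIV \<inter> \<Omega>"
      using True abs_ereal_pos less_le_trans by blast
    then have "emeasure P1 {s<..} = emeasure P1 UNIV" using d1[OF O] d1[OF U] by simp
    moreover have "rearr M F -` {s<..} \<inter> {a..b} = rearr M F -` UNIV \<inter> {a..b}"
      using True rearr_nonneg[of M F] less_le_trans by blast
    then have "emeasure P2 {s<..} = emeasure P2 UNIV" using d2[OF O] d2[OF U] by simp
    ultimately show ?thesis using vUNIV1 vUNIV2 by simp
  next
    case False
    then have s0: "0 \<le> s" by simp
    have "(\<lambda>y. \<bar>F y\<bar>) -` {s<..} \<inter> \<Omega> = C s"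
      by (auto simp: C_def F_eq \<Omega>_def)
    then have e1: "emeasure P1 {s<..} = emeasure M (C s)" by (simp add: d1)
    have "rearr M F -` {s<..} \<inter> {a..b} = {t\<in>{a..b}. ennreal t < distr_fun M F s}"
      using rearr_gt_iff[OF Fm s0] by auto
    then have e2: "emeasure P2 {s<..} = emeasure lborel {t\<in>{a..b}. ennreal t < distr_fun M F s}"
      by (simp add: d2)
    have dF: "distr_fun M F s = emeasure M ((if s < \<bar>S\<bar> then E else {}) \<union> C s)"
      unfolding distr_fun_def Fset ..
    show ?thesis
    proof (cases "s < \<bar>S\<bar>")
      case True
      define D where "D = measure M (E \<union> C s)"
      have disj: "E \<inter> C s = {}" unfolding C_def \<Omega>_def by auto
      have D: "D = a + measure M (C s)" unfolding D_def a_def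
        by (rule finite_measure_Union) (auto simp: disj)
      have Db: "D \<le> b" unfolding D_def b_def by (rule bounded_measure)
      have "distr_fun M F s = ennreal D" using True by (simp add: dF D_def emeasure_eq_measure)
      then have "{t\<in>{a..b}. ennreal t < distr_fun M F s} = {a..<D}"
        using ab Db by (auto simp: ennreal_less_iff)
      moreover have "a \<le> D" using D by simp
      ultimately have "emeasure P2 {s<..} = ennreal (measure M (C s))" using e2 D by simp
      then show ?thesis using e1 by (simp add: emeasure_eq_measure)
    next
      case False
      then have "distr_fun M F s = 0" using nullC[of s] by (simp add: dF)
      then have "{t\<in>{a..b}. ennreal t < distr_fun M F s} = {}" by simp
      then have "emeasure P2 {s<..} = 0" using e2 by (simp only: emeasure_empty)
      then show ?thesis using e1 nullC[of s] False by simp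
    qed
  qed
  let ?G = "insert UNIV (range greaterThan) :: ereal set set"
  have sG: "sets (borel::ereal measure) = sigma_sets UNIV ?G"
  proof -
    have "sets (borel::ereal measure) = sigma_sets UNIV (range greaterThan)"
      by (subst borel_Ioi) simp
    also have "\<dots> = sigma_sets UNIV ?G"
    proof (rule sigma_sets_eqI)
      fix X :: "ereal set" assume "X \<in> range greaterThan"
      then show "X \<in> sigma_sets UNIV ?G" by (auto intro: sigma_sets.Basic)
    next
      fix X :: "ereal set" assume "X \<in> ?G"
      then show "X \<in> sigma_sets UNIV (range greaterThan)"
        by (auto intro: sigma_sets.Basic sigma_sets_top)
    qed
    finally show ?thesis .
  qed
  have P12: "P1 = P2"
  proof (rule measure_eqI_generator_eq[where E="?G" and \<Omega>=UNIV and A="\<lambda>_. UNIV"])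
    show "Int_stable ?G"
    proof (rule Int_stableI)
      fix X Y assume "X \<in> ?G" "Y \<in> ?G"
      moreover have eq: "\<And>x y::ereal. {x<..} \<inter> {y<..} = {max x y<..}" by auto
      ultimately show "X \<inter> Y \<in> ?G" by (auto simp: eq)
    qed
    show "?G \<subseteq> Pow UNIV" by auto
    show "emeasure P1 X = emeasure P2 X" if "X \<in> ?G" for X
      using that vUNIV1 vUNIV2 vgt by auto
    show "sets P1 = sigma_sets UNIV ?G" unfolding P1_def by (simp add: sG)
    show "sets P2 = sigma_sets UNIV ?G" unfolding P2_def by (simp add: sG)
    show "range (\<lambda>_. UNIV) \<subseteq> ?G" by auto
    show "(\<Union>i::nat. UNIV) = (UNIV :: ereal set)" by auto
    show "emeasure P1 UNIV \<noteq> \<infinity>" for i :: nat using vUNIV1 by simp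
  qed
  have L: "(\<integral>\<^sup>+ y \<in> space M - E. epowr \<bar>F y\<bar> \<beta> \<partial>M) = (\<integral>\<^sup>+ x. epowr x \<beta> \<partial>P1)"
  proof -
    have "(\<integral>\<^sup>+ x. epowr x \<beta> \<partial>P1) = (\<integral>\<^sup>+ y. epowr \<bar>F y\<bar> \<beta> \<partial>restrict_space M \<Omega>)"
      unfolding P1_def by (rule nn_integral_distr[OF T1]) simp
    also have "\<dots> = (\<integral>\<^sup>+ y \<in> space M - E. epowr \<bar>F y\<bar> \<beta> \<partial>M)"
      by (subst nn_integral_restrict_space) (auto simp: \<Omega>_def)
    finally show ?thesis by simp
  qed
  have R: "(\<integral>\<^sup>+ t \<in> {a..b}. epowr (rearr M F t) \<beta> \<partial>lborel) = (\<integral>\<^sup>+ x. epowr x \<beta> \<partial>P2)"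
  proof -
    have "(\<integral>\<^sup>+ x. epowr x \<beta> \<partial>P2) = (\<integral>\<^sup>+ t. epowr (rearr M F t) \<beta> \<partial>restrict_space lborel {a..b})"
      unfolding P2_def by (rule nn_integral_distr[OF T2]) simp
    also have "\<dots> = (\<integral>\<^sup>+ t \<in> {a..b}. epowr (rearr M F t) \<beta> \<partial>lborel)"
      by (subst nn_integral_restrict_space) auto
    finally show ?thesis by simp
  qed
  show ?thesis
    using part1 L R P12 unfolding F_def a_def b_def by auto
qed
end
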